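(* Let $\alpha,\beta>-1$, $j\in\mathbb{N}\cup\{0\}$, $M>0$. Let $\{p_n^{(\alpha,\beta)}\}_{n\ge0}$ be the orthonormal Jacobi polynomials (positive leading coefficients) with respect to $(1-x)^\alpha(1+x)^\beta$ on $(-1,1)$, let $\lambda_n=n^2+n(\alpha+\beta+1)$, $K_n^{(j,j)}(1,1)=\sum_{i=0}^n\big((p_i^{(\alpha,\beta)})^{(j)}(1)\big)^2$, and define $$\widetilde\lambda_n=\lambda_n+M\sum_{i=j+1}^n(\lambda_i-\lambda_{i-1})K_{i-1}^{(j,j)}(1,1),\qquad n\ge j+1.$$ Then $$\lim_{n\to+\infty}\frac{\widetilde\lambda_n}{n^{4j+2\alpha+4}}=\frac{M}{2^{2j+\alpha+\beta+1}(2j+\alpha+2)(2j+\alpha+1)\Gamma^2(\alpha+j+1)}.$$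
   Context: Background: $\lambda_n$ are the eigenvalues of the Jacobi differential equation $(x^2-1)y''+(\alpha-\beta+(\alpha+\beta+2)x)y'=\lambda_n y$, and $\widetilde\lambda_n$ are the eigenvalues of the differential operator $\mathbf{L}$ having as eigenfunctions the polynomials orthonormal with respect to $(f,g)=\int_{-1}^1 fg(1-x)^\alpha(1+x)^\beta dx+Mf^{(j)}(1)g^{(j)}(1)$ (with the free parameters $\alpha_1=\dots=\alpha_j=0$). *)

theory Defs
  imports "HOL-Analysis.Analysis" "HOL-Computational_Algebra.Polynomial"
begin

definition jacobi_weight :: "real \<Rightarrow> real \<Rightarrow> real \<Rightarrow> real" where
  "jacobi_weight \<alpha> \<beta> x = (1 - x) powr \<alpha> * (1 + x) powr \<beta>"

definition orthonormal_jacobi :: "real \<Rightarrow> real \<Rightarrow> (nat \<Rightarrow> real poly) \<Rightarrow> bool" where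
  "orthonormal_jacobi \<alpha> \<beta> p \<longleftrightarrow>
     (\<forall>n. degree (p n) = n \<and> lead_coeff (p n) > 0) \<and>
     (\<forall>m n. set_integrable lborel {-1<..<1}
                (\<lambda>x. poly (p m) x * poly (p n) x * jacobi_weight \<alpha> \<beta> x) \<and>
             (LINT x:{-1<..<1}|lborel. poly (p m) x * poly (p n) x * jacobi_weight \<alpha> \<beta> x)
               = (if m = n then 1 else 0))"

definition jac_lambda :: "real \<Rightarrow> real \<Rightarrow> nat \<Rightarrow> real" where
  "jac_lambda \<alpha> \<beta> n = real n ^ 2 + real n * (\<alpha> + \<beta> + 1)"

definition kernel_jj :: "(nat \<Rightarrow> real poly) \<Rightarrow> nat \<Rightarrow> nat \<Rightarrow> real" where
  "kernel_jj p j n = (\<Sum>i=0..n. (poly ((pderiv ^^ j) (p i)) 1) ^ 2)"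

text \<open>tilde lambda_n; meaningful for n \<ge> j+1 (the limit only concerns large n).\<close>
definition lambda_tilde :: "real \<Rightarrow> real \<Rightarrow> real \<Rightarrow> (nat \<Rightarrow> real poly) \<Rightarrow> nat \<Rightarrow> nat \<Rightarrow> real" where
  "lambda_tilde \<alpha> \<beta> M p j n = jac_lambda \<alpha> \<beta> n
     + M * (\<Sum>i=j+1..n. (jac_lambda \<alpha> \<beta> i - jac_lambda \<alpha> \<beta> (i - 1)) * kernel_jj p j (i - 1))"

end

theory Submission
  imports Defs "HOL-Real_Asymp.Real_Asymp"
begin

lemma nonneg_has_integral_set_integrable:
  fixes f :: "real \<Rightarrow> real"
  assumes S: "S \<in> sets borel" and fm: "f \<in> borel_measurable borel"
    and nn: "\<And>x. x \<in> S \<Longrightarrow> 0 \<le> f x" and I: "(f has_integral I) S"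
  shows "set_integrable lborel S f \<and> (LINT x:S|lborel. f x) = I"
proof -
  define h where "h x = indicator S x * f x" for x
  have hI: "(h has_integral I) UNIV"
  proof -
    have "h = (\<lambda>x. if x \<in> S then f x else 0)" by (auto simp: h_def indicator_def)
    then show ?thesis using I by (simp add: has_integral_restrict_UNIV)
  qed
  have hm: "h \<in> borel_measurable borel" unfolding h_def using S fm by measurable
  have hnn: "\<And>x. 0 \<le> h x" using nn by (simp add: h_def indicator_def)
  have nn_eq: "integral\<^sup>N lborel h = I" by (rule nn_integral_has_integral_lborel[OF hm hnn hI])
  have int: "integrable lborel h"
    by (rule integrableI_nonneg) (use hm hnn nn_eq in auto)
  have "integral\<^sup>L lborel h = I"
    by (metis has_integral_integral_lborel has_integral_unique hI int)
  then show ?thesis using int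
    unfolding set_integrable_def set_lebesgue_integral_def h_def by simp
qed

lemma moment_has_integral:
  fixes \<alpha> \<beta> :: real
  assumes a: "\<alpha> > -1" and b: "\<beta> > -1"
  shows "((\<lambda>x. ((1-x)/2)^s * jacobi_weight \<alpha> \<beta> x) has_integral
           2 powr (\<alpha>+\<beta>+1) * Beta (\<alpha>+1+real s) (\<beta>+1)) {-1<..<1}"
proof -
  define g where "g t = t powr (\<alpha> + 1 + real s - 1) * (1 - t) powr (\<beta> + 1 - 1)" for t :: real
  have "(g has_integral Beta (\<alpha>+1+real s) (\<beta>+1)) (cbox 0 1)"
    unfolding g_def using has_integral_Beta_real[of "\<alpha>+1+real s" "\<beta>+1"] a b by simp
  from has_integral_affinity[OF this, of "-1/2" "1/2"]
  have "((\<lambda>x. g (-1/2 * x + 1/2)) has_integral 2 * Beta (\<alpha>+1+real s) (\<beta>+1)) {-1..1}"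
  proof -
    have im: "(\<lambda>x::real. 1 - 2*x) ` {0..1} = {-1..1}"
    proof
      show "{-1..1} \<subseteq> (\<lambda>x::real. 1 - 2*x) ` {0..1}"
      proof
        fix y :: real assume "y \<in> {-1..1}"
        then show "y \<in> (\<lambda>x::real. 1 - 2*x) ` {0..1}"
          by (intro image_eqI[where x="(1-y)/2"]) (auto simp: field_simps)
      qed
    qed auto
    show ?thesis using has_integral_affinity[OF \<open>(g has_integral _) (cbox 0 1)\<close>, of "-1/2" "1/2"] im
      by simp
  qed
  then have h1: "((\<lambda>x. 2 powr (\<alpha>+\<beta>) * g (-1/2 * x + 1/2)) has_integral
      2 powr (\<alpha>+\<beta>) * (2 * Beta (\<alpha>+1+real s) (\<beta>+1))) {-1<..<1}"
    by (intro has_integral_mult_right) (simp add: has_integral_Icc_iff_Ioo)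
  have eq: "2 powr (\<alpha>+\<beta>) * g (-1/2 * x + 1/2) = ((1-x)/2)^s * jacobi_weight \<alpha> \<beta> x"
    if "x \<in> {-1<..<1}" for x
  proof -
    have p1: "1 - x > 0" "1 + x > 0" using that by auto
    have "g (-1/2 * x + 1/2) = ((1-x)/2) powr (\<alpha> + real s) * ((1+x)/2) powr \<beta>"
      by (simp add: g_def field_simps)
    also have "\<dots> = ((1-x)/2)^s * ((1-x)/2) powr \<alpha> * ((1+x)/2) powr \<beta>"
      using p1 by (simp add: powr_add powr_realpow)
    also have "\<dots> = ((1-x)/2)^s * ((1-x) powr \<alpha> / 2 powr \<alpha>) * ((1+x) powr \<beta> / 2 powr \<beta>)"
      using p1 by (simp add: powr_divide)
    finally show ?thesis
      by (simp add: jacobi_weight_def powr_add field_simps)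
  qed
  have "2 powr (\<alpha>+\<beta>) * (2 * Beta (\<alpha>+1+real s) (\<beta>+1)) = 2 powr (\<alpha>+\<beta>+1) * Beta (\<alpha>+1+real s) (\<beta>+1)"
    by (simp add: powr_add)
  with h1 eq show ?thesis
    by (metis (no_types, lifting) has_integral_cong)
qed

lemma moment:
  fixes \<alpha> \<beta> :: real
  assumes a: "\<alpha> > -1" and b: "\<beta> > -1"
  shows "set_integrable lborel {-1<..<1} (\<lambda>x. ((1-x)/2)^s * jacobi_weight \<alpha> \<beta> x) \<and>
         (LINT x:{-1<..<1}|lborel. ((1-x)/2)^s * jacobi_weight \<alpha> \<beta> x) =
           2 powr (\<alpha>+\<beta>+1) * Beta (\<alpha>+1+real s) (\<beta>+1)"
  by (rule nonneg_has_integral_set_integrable[OF _ _ _ moment_has_integral[OF a b]])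
     (auto simp: jacobi_weight_def)

lemma set_integrable_sum':
  fixes f :: "'i \<Rightarrow> 'a \<Rightarrow> real"
  assumes "\<And>i. i \<in> I \<Longrightarrow> set_integrable M S (f i)"
  shows "set_integrable M S (\<lambda>x. \<Sum>i\<in>I. f i x)"
  using assms unfolding set_integrable_def by (simp add: sum_distrib_left)

lemma set_integral_sum':
  fixes f :: "'i \<Rightarrow> 'a \<Rightarrow> real"
  assumes "\<And>i. i \<in> I \<Longrightarrow> set_integrable M S (f i)"
  shows "(LINT x:S|M. (\<Sum>i\<in>I. f i x)) = (\<Sum>i\<in>I. LINT x:S|M. f i x)"
  using assms unfolding set_integrable_def set_lebesgue_integral_def
  by (simp add: sum_distrib_left integral_sum)

definition JL :: "real \<Rightarrow> real \<Rightarrow> (real \<Rightarrow> real) \<Rightarrow> real" where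
  "JL \<alpha> \<beta> f = (LINT x:{-1<..<1}|lborel. f x * jacobi_weight \<alpha> \<beta> x)"

definition JI :: "real \<Rightarrow> real \<Rightarrow> (real \<Rightarrow> real) \<Rightarrow> bool" where
  "JI \<alpha> \<beta> f \<longleftrightarrow> set_integrable lborel {-1<..<1} (\<lambda>x. f x * jacobi_weight \<alpha> \<beta> x)"

lemma JI_sum: "(\<And>i. i \<in> I \<Longrightarrow> JI \<alpha> \<beta> (f i)) \<Longrightarrow> JI \<alpha> \<beta> (\<lambda>x. \<Sum>i\<in>I. f i x)"
  unfolding JI_def by (drule set_integrable_sum') (simp add: sum_distrib_right)

lemma JL_sum: "(\<And>i. i \<in> I \<Longrightarrow> JI \<alpha> \<beta> (f i)) \<Longrightarrow> JL \<alpha> \<beta> (\<lambda>x. \<Sum>i\<in>I. f i x) = (\<Sum>i\<in>I. JL \<alpha> \<beta> (f i))"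
  unfolding JI_def JL_def by (drule set_integral_sum') (simp add: sum_distrib_right)

lemma JI_cmult: "JI \<alpha> \<beta> f \<Longrightarrow> JI \<alpha> \<beta> (\<lambda>x. c * f x)"
  unfolding JI_def by (simp add: mult.assoc)

lemma JL_cmult: "JL \<alpha> \<beta> (\<lambda>x. c * f x) = c * JL \<alpha> \<beta> f"
  unfolding JL_def by (simp add: mult.assoc)

lemma JL_cong: "(\<And>x. f x = g x) \<Longrightarrow> JL \<alpha> \<beta> f = JL \<alpha> \<beta> g"
  by (simp add: JL_def)

lemma tpow_poly: "((1-x)/2)^s = poly ([:1/2, -1/2:] ^ s) (x::real)"
  by (simp add: field_simps)

lemma JI_moment: "\<alpha> > -1 \<Longrightarrow> \<beta> > -1 \<Longrightarrow> JI \<alpha> \<beta> (\<lambda>x. ((1-x)/2)^s)"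
  using moment unfolding JI_def by blast

lemma JL_moment: "\<alpha> > -1 \<Longrightarrow> \<beta> > -1 \<Longrightarrow>
   JL \<alpha> \<beta> (\<lambda>x. ((1-x)/2)^s) = 2 powr (\<alpha>+\<beta>+1) * Beta (\<alpha>+1+real s) (\<beta>+1)"
  using moment unfolding JL_def by blast

lemma poly_tbasis:
  fixes P :: "real poly"
  defines "Q \<equiv> pcompose P [:1, -2:]"
  shows "poly P x = (\<Sum>i\<le>degree Q. coeff Q i * ((1-x)/2)^i)"
proof -
  have "poly [:1,-2:] ((1-x)/2) = x" by (simp add: field_simps)
  then have "poly P x = poly Q ((1-x)/2)" by (simp add: Q_def poly_pcompose)
  then show ?thesis by (simp add: poly_altdef)
qed

lemma JI_poly: "\<alpha> > -1 \<Longrightarrow> \<beta> > -1 \<Longrightarrow> JI \<alpha> \<beta> (poly P)"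
  apply (subst poly_tbasis[abs_def])
  apply (intro JI_sum JI_cmult JI_moment)
  by auto

lemma alt_split:
  fixes f :: "nat \<Rightarrow> real"
  shows "(\<Sum>k\<le>Suc n. (-1)^k * real (Suc n choose k) * f k) =
         (\<Sum>k\<le>n. (-1)^k * real (n choose k) * (f k - f (Suc k)))"
proof -
  have h1: "(\<Sum>k\<le>n. (-1)^(Suc k) * real (n choose Suc k) * f (Suc k)) =
            (\<Sum>k\<le>n. (-1)^k * real (n choose k) * f k) - f 0"
  proof -
    have "(\<Sum>k\<le>Suc n. (-1)^k * real (n choose k) * f k) =
          (-1)^0 * real (n choose 0) * f 0 + (\<Sum>k\<le>n. (-1)^(Suc k) * real (n choose Suc k) * f (Suc k))"
      by (rule sum.atMost_Suc_shift)
    moreover have "(\<Sum>k\<le>Suc n. (-1)^k * real (n choose k) * f k) = (\<Sum>k\<le>n. (-1)^k * real (n choose k) * f k)"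
      by simp
    ultimately show ?thesis by simp
  qed
  have "(\<Sum>k\<le>Suc n. (-1)^k * real (Suc n choose k) * f k) =
        f 0 + (\<Sum>k\<le>n. (-1)^(Suc k) * real (Suc n choose Suc k) * f (Suc k))"
    by (subst sum.atMost_Suc_shift) simp
  also have "(\<Sum>k\<le>n. (-1)^(Suc k) * real (Suc n choose Suc k) * f (Suc k)) =
     (\<Sum>k\<le>n. (-1)^(Suc k) * real (n choose k) * f (Suc k)) + (\<Sum>k\<le>n. (-1)^(Suc k) * real (n choose Suc k) * f (Suc k))"
    by (simp add: sum.distrib[symmetric] algebra_simps)
  finally have h2: "(\<Sum>k\<le>Suc n. (-1)^k * real (Suc n choose k) * f k) =
     f 0 + ((\<Sum>k\<le>n. (-1)^(Suc k) * real (n choose k) * f (Suc k)) + (\<Sum>k\<le>n. (-1)^(Suc k) * real (n choose Suc k) * f (Suc k)))" .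
  have h3: "(\<Sum>k\<le>n. (-1)^(Suc k) * real (n choose k) * f (Suc k)) = - (\<Sum>k\<le>n. (-1)^k * real (n choose k) * f (Suc k))"
    by (simp add: sum_negf[symmetric])
  show ?thesis unfolding h2 h3 h1
    by (simp add: sum_subtractf right_diff_distrib)
qed

lemma fin_diff_poly:
  fixes P :: "real poly"
  assumes "degree P < n"
  shows "(\<Sum>k\<le>n. (-1)^k * real (n choose k) * poly P (real k)) = 0"
  using assms
proof (induction n arbitrary: P)
  case 0
  then show ?case by simp
next
  case (Suc n)
  define D where "D = P - pcompose P [:1,1:]"
  have pD: "poly D (real k) = poly P (real k) - poly P (real (Suc k))" for k
    by (simp add: D_def poly_pcompose algebra_simps)
  have "(\<Sum>k\<le>Suc n. (-1)^k * real (Suc n choose k) * poly P (real k)) =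
        (\<Sum>k\<le>n. (-1)^k * real (n choose k) * poly D (real k))"
    by (subst alt_split) (simp add: pD)
  also have "\<dots> = 0"
  proof (cases "D = 0")
    case True then show ?thesis by simp
  next
    case False
    have dP: "degree P > 0"
    proof (rule ccontr)
      assume "\<not> degree P > 0"
      then obtain c where "P = [:c:]" by (metis degree_eq_zeroE not_gr_zero)
      then have "D = 0" by (simp add: D_def)
      with False show False by simp
    qed
    have le: "degree D \<le> degree P"
      unfolding D_def by (rule order.trans[OF degree_diff_le_max]) (simp add: degree_pcompose)
    have "coeff D (degree P) = 0"
    proof -
      have "lead_coeff (pcompose P [:1,1:]) = lead_coeff P"
        by (subst lead_coeff_comp) auto
      moreover have "degree (pcompose P [:1,1:]) = degree P" by (simp add: degree_pcompose)
      ultimately show ?thesis by (simp add: D_def)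
    qed
    then have "degree D \<noteq> degree P" using False by (metis leading_coeff_0_iff)
    with le have "degree D < n" using Suc.prems by linarith
    then show ?thesis by (rule Suc.IH)
  qed
  finally show ?case .
qed

lemma recip_sum:
  fixes c :: real
  assumes "c > 0"
  shows "(\<Sum>k\<le>n. (-1)^k * real (n choose k) * (1 / (c + real k))) = fact n / pochhammer c (n+1)"
  using assms
proof (induction n arbitrary: c)
  case 0
  then show ?case by simp
next
  case (Suc n)
  have p1: "pochhammer c (n+1) > 0" "pochhammer (c+1) (n+1) > 0" using Suc.prems
    by (auto intro!: pochhammer_pos)
  have "(\<Sum>k\<le>Suc n. (-1)^k * real (Suc n choose k) * (1 / (c + real k))) =
        (\<Sum>k\<le>n. (-1)^k * real (n choose k) * (1 / (c + real k) - 1 / (c + real (Suc k))))"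
    by (rule alt_split)
  also have "\<dots> = (\<Sum>k\<le>n. (-1)^k * real (n choose k) * (1 / (c + real k))) -
                   (\<Sum>k\<le>n. (-1)^k * real (n choose k) * (1 / ((c+1) + real k)))"
    by (simp add: sum_subtractf[symmetric] algebra_simps)
  also have "\<dots> = fact n / pochhammer c (n+1) - fact n / pochhammer (c+1) (n+1)"
  proof -
    have A: "(\<Sum>k\<le>n. (-1)^k * real (n choose k) * (1 / (c + real k))) = fact n / pochhammer c (n+1)"
      by (rule Suc.IH) (use Suc.prems in simp)
    have B: "(\<Sum>k\<le>n. (-1)^k * real (n choose k) * (1 / ((c+1) + real k))) = fact n / pochhammer (c+1) (n+1)"
      by (rule Suc.IH) (use Suc.prems in simp)
    show ?thesis by (simp only: A B)
  qed
  also have "\<dots> = fact (Suc n) / pochhammer c (Suc n + 1)"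
  proof -
    have e1: "pochhammer c (Suc n + 1) = c * pochhammer (c+1) (n+1)"
      by (simp add: pochhammer_rec)
    have e2: "pochhammer c (Suc n + 1) = (c + real (n+1)) * pochhammer c (n+1)"
      by (simp add: pochhammer_rec' del: pochhammer_Suc)
    have "fact n / pochhammer c (n+1) = fact n * (c + real (n+1)) / pochhammer c (Suc n + 1)"
    proof -
      have nz: "c + real (n+1) \<noteq> 0" "pochhammer c (n+1) \<noteq> 0" using p1 Suc.prems by auto
      show ?thesis unfolding e2 using nz by (simp only: mult_divide_mult_cancel_left_if mult.commute[of "fact n"]) simp
    qed
    moreover have "fact n / pochhammer (c+1) (n+1) = fact n * c / pochhammer c (Suc n + 1)"
    proof -
      have nz: "c \<noteq> 0" "pochhammer (c+1) (n+1) \<noteq> 0" using p1 Suc.prems by auto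
      show ?thesis unfolding e1 using nz by (simp only: mult_divide_mult_cancel_left_if mult.commute[of "fact n"]) simp
    qed
    ultimately show ?thesis by (simp add: diff_divide_distrib[symmetric] algebra_simps)
  qed
  finally show ?case .
qed

lemma higher_pderiv_lin_power:
  "(pderiv ^^ j) ([:c, 1:] ^ k) = smult (\<Prod>i<j. real (k - i)) ([:c, 1:] ^ (k - j))"
proof (induction j)
  case 0 then show ?case by simp
next
  case (Suc j)
  have "(pderiv ^^ Suc j) ([:c, 1:] ^ k) = pderiv ((pderiv ^^ j) ([:c, 1:] ^ k))" by simp
  also have "\<dots> = smult (\<Prod>i<j. real (k - i)) (smult (real (k - j)) ([:c, 1:] ^ (k - j - 1)))"
    by (simp add: Suc.IH pderiv_smult pderiv_power pderiv_pCons)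
  also have "\<dots> = smult (\<Prod>i<Suc j. real (k - i)) ([:c, 1:] ^ (k - Suc j))"
    by (simp add: mult.commute)
  finally show ?case .
qed

lemma prod_rev_fact: "(\<Prod>i<j. real (j - i)) = fact j"
proof (induction j)
  case 0 then show ?case by simp
next
  case (Suc j)
  have "(\<Prod>i<Suc j. real (Suc j - i)) = real (Suc j - 0) * (\<Prod>i<j. real (Suc j - Suc i))"
    by (rule prod.lessThan_Suc_shift)
  also have "\<dots> = real (Suc j) * fact j" using Suc.IH by simp
  finally show ?case by simp
qed

lemma higher_pderiv_lin_power_at1:
  "poly ((pderiv ^^ j) ([:-1, 1:] ^ k)) (1::real) = (if k = j then fact j else 0)"
proof -
  have "poly ((pderiv ^^ j) ([:-1, 1:] ^ k)) 1 = (\<Prod>i<j. real (k - i)) * 0 ^ (k - j)"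
    by (simp add: higher_pderiv_lin_power poly_power)
  also have "\<dots> = (if k = j then fact j else 0)"
  proof (cases "k < j")
    case True
    then have "(\<Prod>i<j. real (k - i)) = 0" by (intro prod_zero) auto
    then show ?thesis using True by simp
  next
    case False
    have pr: "(\<Prod>i<j. real j - real i) = fact j"
      using prod_rev_fact[of j] by (metis (no_types, lifting) lessThan_iff less_imp_le of_nat_diff prod.cong)
    show ?thesis using False pr by (cases "k = j") auto
  qed
  finally show ?thesis .
qed

definition tpoly :: "real poly" where "tpoly = [:1/2, -1/2:]"

lemma poly_tpoly: "poly tpoly x = (1 - x) / 2"
  by (simp add: tpoly_def field_simps)

lemma tpoly_eq: "tpoly ^ k = smult ((-1/2) ^ k) ([:-1, 1:] ^ k)"
proof -
  have t: "tpoly = smult (-1/2) [:-1, 1:]" by (simp add: tpoly_def)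
  show ?thesis by (subst t) (rule smult_power)
qed

lemma higher_pderiv_tpoly_at1:
  "poly ((pderiv ^^ j) (tpoly ^ k)) 1 = (if k = j then (-1/2)^j * fact j else 0)"
  by (simp only: tpoly_eq higher_pderiv_smult poly_smult higher_pderiv_lin_power_at1) simp

lemma higher_pderiv_tsum_at1:
  fixes e :: "nat \<Rightarrow> real"
  assumes "j > n \<Longrightarrow> e j = 0"
  shows "poly ((pderiv ^^ j) (\<Sum>k\<le>n. smult (e k) (tpoly ^ k))) 1 = e j * (-1/2)^j * fact j"
proof -
  have "poly ((pderiv ^^ j) (\<Sum>k\<le>n. smult (e k) (tpoly ^ k))) 1 =
        (\<Sum>k\<le>n. e k * (if k = j then (-1/2)^j * fact j else 0))"
    by (simp only: higher_pderiv_sum higher_pderiv_smult poly_sum poly_smult higher_pderiv_tpoly_at1)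
  also have "\<dots> = e j * (-1/2)^j * fact j"
    using assms by (cases "j \<le> n") (auto simp: if_distrib cong: if_cong)
  finally show ?thesis .
qed

definition ecoef :: "real \<Rightarrow> real \<Rightarrow> nat \<Rightarrow> nat \<Rightarrow> real" where
  "ecoef \<alpha> \<beta> n k = (-1)^k * real (n choose k) * pochhammer (real n + \<alpha> + \<beta> + 1) k / pochhammer (\<alpha> + 1) k"

lemma poch_G: "(z::real) > 0 \<Longrightarrow> pochhammer z n = Gamma (z + real n) / Gamma z"
  by (rule pochhammer_Gamma) (auto dest: nonpos_Ints_nonpos)

lemma ortho_term:
  fixes \<alpha> \<beta> :: real
  assumes a: "\<alpha> > -1" and b: "\<beta> > -1" and mn: "m < n"
  shows "ecoef \<alpha> \<beta> n k * Beta (\<alpha>+1+real(k+m)) (\<beta>+1) =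
     Gamma (\<alpha>+1) * Gamma (\<beta>+1) / Gamma (real n+\<alpha>+\<beta>+1) *
     ((-1)^k * real (n choose k) * (pochhammer (\<alpha>+1+real k) m * pochhammer (\<alpha>+\<beta>+2+real m+real k) (n-1-m)))"
proof -
  have c0: "real n + \<alpha> + \<beta> + 1 > 0" using a b mn by linarith
  have e1: "pochhammer (real n + \<alpha> + \<beta> + 1) k = Gamma (real n + \<alpha> + \<beta> + 1 + real k) / Gamma (real n + \<alpha> + \<beta> + 1)"
    using c0 by (rule poch_G)
  have e2: "pochhammer (\<alpha> + 1) k = Gamma (\<alpha> + 1 + real k) / Gamma (\<alpha> + 1)"
    using a by (intro poch_G) simp
  have e3: "pochhammer (\<alpha>+1+real k) m = Gamma (\<alpha>+1+real(k+m)) / Gamma (\<alpha>+1+real k)"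
    using a by (subst poch_G) (auto simp: add_ac)
  have e4: "pochhammer (\<alpha>+\<beta>+2+real m+real k) (n-1-m) = Gamma (real n + \<alpha> + \<beta> + 1 + real k) / Gamma (\<alpha>+1+real(k+m) + (\<beta>+1))"
    using a b mn by (subst poch_G) (auto simp: of_nat_diff intro!: arg_cong2[where f="(/)"] arg_cong[where f=Gamma])
  have B: "Beta (\<alpha>+1+real(k+m)) (\<beta>+1) = Gamma (\<alpha>+1+real(k+m)) * Gamma (\<beta>+1) / Gamma (\<alpha>+1+real(k+m) + (\<beta>+1))"
    by (simp add: Beta_def)
  have p: "Gamma (real n + \<alpha> + \<beta> + 1) > 0" "Gamma (\<alpha> + 1 + real k) > 0" "Gamma (\<alpha> + 1) > 0"
     "Gamma (\<alpha>+1+real(k+m) + (\<beta>+1)) > 0" "Gamma (\<beta>+1) > 0" "Gamma (\<alpha>+1+real(k+m)) > 0"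
    using a b c0 by (auto intro!: Gamma_real_pos)
  show ?thesis unfolding ecoef_def e1 e2 e3 e4 B using p by (simp add: field_simps)
qed

lemma degree_linprod: "degree (\<Prod>i<m. [:f i, 1::real:]) = m"
  by (subst degree_prod_eq_sum_degree) auto

lemma poly_linprod: "poly (\<Prod>i<m. [:z + real i, 1::real:]) x = pochhammer (x + z) m"
  by (simp add: poly_prod pochhammer_prod add_ac atLeast0LessThan)

lemma ortho_sum:
  fixes \<alpha> \<beta> :: real
  assumes a: "\<alpha> > -1" and b: "\<beta> > -1" and mn: "m < n"
  shows "(\<Sum>k\<le>n. ecoef \<alpha> \<beta> n k * Beta (\<alpha>+1+real(k+m)) (\<beta>+1)) = 0"
proof -
  define P where "P = (\<Prod>i<m. [:\<alpha>+1 + real i, 1::real:]) * (\<Prod>i<n-1-m. [:\<alpha>+\<beta>+2+real m + real i, 1::real:])"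
  have dP: "degree P < n"
    unfolding P_def using mn by (subst degree_mult_eq) (auto simp: degree_linprod)
  have pP: "poly P (real k) = pochhammer (\<alpha>+1+real k) m * pochhammer (\<alpha>+\<beta>+2+real m+real k) (n-1-m)" for k
    unfolding P_def poly_mult poly_linprod by (simp add: add_ac)
  have "(\<Sum>k\<le>n. ecoef \<alpha> \<beta> n k * Beta (\<alpha>+1+real(k+m)) (\<beta>+1)) =
     Gamma (\<alpha>+1) * Gamma (\<beta>+1) / Gamma (real n+\<alpha>+\<beta>+1) * (\<Sum>k\<le>n. (-1)^k * real (n choose k) * poly P (real k))"
    unfolding sum_distrib_left by (rule sum.cong[OF refl]) (simp only: ortho_term[OF a b mn] pP)
  also have "\<dots> = 0" using fin_diff_poly[OF dP] by simp
  finally show ?thesis .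
qed

lemma norm_term:
  fixes \<alpha> \<beta> :: real
  assumes a: "\<alpha> > -1" and b: "\<beta> > -1" and n: "n \<ge> 1"
  shows "ecoef \<alpha> \<beta> n k * Beta (\<alpha>+1+real(k+n)) (\<beta>+1) =
     Gamma (\<alpha>+1) * Gamma (\<beta>+1) / Gamma (real n+\<alpha>+\<beta>+1) *
     ((-1)^k * real (n choose k) * (pochhammer (\<alpha>+1+real k) n / (real n+\<alpha>+\<beta>+1 + real k)))"
proof -
  have c0: "real n + \<alpha> + \<beta> + 1 > 0" using a b n by linarith
  have e1: "pochhammer (real n + \<alpha> + \<beta> + 1) k = Gamma (real n + \<alpha> + \<beta> + 1 + real k) / Gamma (real n + \<alpha> + \<beta> + 1)"
    using c0 by (rule poch_G)
  have e2: "pochhammer (\<alpha> + 1) k = Gamma (\<alpha> + 1 + real k) / Gamma (\<alpha> + 1)"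
    using a by (intro poch_G) simp
  have e3: "pochhammer (\<alpha>+1+real k) n = Gamma (\<alpha>+1+real(k+n)) / Gamma (\<alpha>+1+real k)"
    using a by (subst poch_G) (auto simp: add_ac)
  have e4: "Gamma (\<alpha>+1+real(k+n) + (\<beta>+1)) = (real n + \<alpha> + \<beta> + 1 + real k) * Gamma (real n + \<alpha> + \<beta> + 1 + real k)"
  proof -
    have "\<alpha>+1+real(k+n) + (\<beta>+1) = (real n + \<alpha> + \<beta> + 1 + real k) + 1" by simp
    moreover have "real n + \<alpha> + \<beta> + 1 + real k \<notin> \<int>\<^sub>\<le>\<^sub>0"
      using c0 by (auto dest: nonpos_Ints_nonpos)
    ultimately show ?thesis by (metis Gamma_plus1)
  qed
  have B: "Beta (\<alpha>+1+real(k+n)) (\<beta>+1) = Gamma (\<alpha>+1+real(k+n)) * Gamma (\<beta>+1) / Gamma (\<alpha>+1+real(k+n) + (\<beta>+1))"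
    by (simp add: Beta_def)
  have p: "Gamma (real n + \<alpha> + \<beta> + 1) > 0" "Gamma (\<alpha> + 1 + real k) > 0" "Gamma (\<alpha> + 1) > 0"
     "Gamma (real n + \<alpha> + \<beta> + 1 + real k) > 0" "Gamma (\<beta>+1) > 0" "Gamma (\<alpha>+1+real(k+n)) > 0"
     "real n + \<alpha> + \<beta> + 1 + real k > 0"
    using a b c0 by (auto intro!: Gamma_real_pos)
  obtain X where X: "X = real n + \<alpha> + \<beta> + 1 + real k" by blast
  have gX: "Gamma X \<noteq> 0" using X p(4) by simp
  show ?thesis unfolding ecoef_def e1 e2 e3 B e4 X[symmetric] using p unfolding X[symmetric]
    by (simp add: field_simps gX)
qed

lemma norm_sum:
  fixes \<alpha> \<beta> :: real
  assumes a: "\<alpha> > -1" and b: "\<beta> > -1" and n: "n \<ge> 1"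
  shows "(\<Sum>k\<le>n. ecoef \<alpha> \<beta> n k * Beta (\<alpha>+1+real(k+n)) (\<beta>+1)) =
     Gamma (\<alpha>+1) * Gamma (\<beta>+1) / Gamma (real n+\<alpha>+\<beta>+1) *
     ((-1)^n * pochhammer (\<beta>+1) n * fact n / pochhammer (real n+\<alpha>+\<beta>+1) (n+1))"
proof -
  define c where "c = real n+\<alpha>+\<beta>+1"
  have c0: "c > 0" using a b n unfolding c_def by linarith
  define R where "R = (\<Prod>i<n. [:\<alpha>+1 + real i, 1::real:])"
  define S where "S = synthetic_div R (-c)"
  have dS: "degree S < n" unfolding S_def degree_synthetic_div R_def degree_linprod using n by simp
  have pR: "poly R x = (x + c) * poly S x + poly R (-c)" for x
  proof -
    have "poly R x = poly ([:- (-c), 1:] * synthetic_div R (-c) + [:poly R (-c):]) x"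
      by (subst synthetic_div_correct') simp
    then show ?thesis by (simp add: S_def algebra_simps)
  qed
  have Rc: "poly R (-c) = (-1)^n * pochhammer (\<beta>+1) n"
  proof -
    have "poly R (-c) = pochhammer (- (real n + \<beta>)) n"
      unfolding R_def poly_linprod c_def by (simp add: algebra_simps)
    also have "\<dots> = (-1)^n * pochhammer (\<beta>+1) n"
      by (subst pochhammer_minus) (simp add: algebra_simps)
    finally show ?thesis .
  qed
  have trm: "pochhammer (\<alpha>+1+real k) n / (c + real k) = poly S (real k) + poly R (-c) * (1 / (c + real k))" for k
  proof -
    have "pochhammer (\<alpha>+1+real k) n = poly R (real k)" unfolding R_def poly_linprod by (simp add: add_ac)
    also have "\<dots> = (real k + c) * poly S (real k) + poly R (-c)" by (rule pR)
    finally show ?thesis using c0 by (simp add: field_simps)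
  qed
  have "(\<Sum>k\<le>n. ecoef \<alpha> \<beta> n k * Beta (\<alpha>+1+real(k+n)) (\<beta>+1)) =
     Gamma (\<alpha>+1) * Gamma (\<beta>+1) / Gamma (real n+\<alpha>+\<beta>+1) *
       (\<Sum>k\<le>n. (-1)^k * real (n choose k) * (pochhammer (\<alpha>+1+real k) n / (c + real k)))"
    unfolding sum_distrib_left c_def by (rule sum.cong[OF refl]) (simp only: norm_term[OF a b n])
  also have "(\<Sum>k\<le>n. (-1)^k * real (n choose k) * (pochhammer (\<alpha>+1+real k) n / (c + real k))) =
     (\<Sum>k\<le>n. (-1)^k * real (n choose k) * poly S (real k)) + poly R (-c) * (\<Sum>k\<le>n. (-1)^k * real (n choose k) * (1 / (c + real k)))"
    by (simp only: trm sum_distrib_left sum.distrib[symmetric] distrib_left mult_ac)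
  also have "\<dots> = poly R (-c) * (fact n / pochhammer c (n+1))"
    by (simp only: fin_diff_poly[OF dS] recip_sum[OF c0])
  finally show ?thesis unfolding Rc by (simp add: c_def mult_ac)
qed

definition qp :: "real \<Rightarrow> real \<Rightarrow> nat \<Rightarrow> real poly" where
  "qp \<alpha> \<beta> n = (\<Sum>k\<le>n. smult (ecoef \<alpha> \<beta> n k) (tpoly ^ k))"

lemma poly_qp: "poly (qp \<alpha> \<beta> n) x = (\<Sum>k\<le>n. ecoef \<alpha> \<beta> n k * ((1-x)/2)^k)"
  by (simp add: qp_def poly_sum poly_tpoly)

lemma JI_cong: "(\<And>x. f x = g x) \<Longrightarrow> JI \<alpha> \<beta> f = JI \<alpha> \<beta> g"
  by (simp add: JI_def)

lemma JI_poly': "\<alpha> > -1 \<Longrightarrow> \<beta> > -1 \<Longrightarrow> (\<And>x. f x = poly P x) \<Longrightarrow> JI \<alpha> \<beta> f"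
  using JI_poly[of \<alpha> \<beta> P] JI_cong[of f "poly P" \<alpha> \<beta>] by simp

lemma JI_qt:
  assumes a: "\<alpha> > -1" and b: "\<beta> > -1"
  shows "JI \<alpha> \<beta> (\<lambda>x. poly (qp \<alpha> \<beta> n) x * ((1-x)/2)^i)"
  by (rule JI_poly'[OF a b, where P="qp \<alpha> \<beta> n * tpoly ^ i"]) (simp add: poly_tpoly)

lemma JL_qp_t:
  assumes a: "\<alpha> > -1" and b: "\<beta> > -1"
  shows "JL \<alpha> \<beta> (\<lambda>x. poly (qp \<alpha> \<beta> n) x * ((1-x)/2)^m) =
         2 powr (\<alpha>+\<beta>+1) * (\<Sum>k\<le>n. ecoef \<alpha> \<beta> n k * Beta (\<alpha>+1+real(k+m)) (\<beta>+1))"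
proof -
  have "JL \<alpha> \<beta> (\<lambda>x. poly (qp \<alpha> \<beta> n) x * ((1-x)/2)^m) =
        JL \<alpha> \<beta> (\<lambda>x. \<Sum>k\<le>n. ecoef \<alpha> \<beta> n k * ((1-x)/2)^(k+m))"
    by (rule JL_cong) (simp add: poly_qp sum_distrib_right power_add mult.assoc)
  also have "\<dots> = (\<Sum>k\<le>n. JL \<alpha> \<beta> (\<lambda>x. ecoef \<alpha> \<beta> n k * ((1-x)/2)^(k+m)))"
    by (rule JL_sum) (intro JI_cmult JI_moment a b)
  also have "\<dots> = (\<Sum>k\<le>n. ecoef \<alpha> \<beta> n k * (2 powr (\<alpha>+\<beta>+1) * Beta (\<alpha>+1+real(k+m)) (\<beta>+1)))"
    by (simp only: JL_cmult JL_moment[OF a b])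
  finally show ?thesis by (simp add: sum_distrib_left mult_ac)
qed

lemma JL_qp_lower:
  assumes a: "\<alpha> > -1" and b: "\<beta> > -1" and d: "degree P < n"
  shows "JL \<alpha> \<beta> (\<lambda>x. poly (qp \<alpha> \<beta> n) x * poly P x) = 0"
proof -
  define Q where "Q = pcompose P [:1, -2:]"
  have dQ: "degree Q = degree P" by (simp add: Q_def degree_pcompose)
  have "JL \<alpha> \<beta> (\<lambda>x. poly (qp \<alpha> \<beta> n) x * poly P x) =
        JL \<alpha> \<beta> (\<lambda>x. \<Sum>i\<le>degree Q. coeff Q i * (poly (qp \<alpha> \<beta> n) x * ((1-x)/2)^i))"
    by (rule JL_cong) (simp add: poly_tbasis[of P] Q_def sum_distrib_left mult_ac)
  also have "\<dots> = (\<Sum>i\<le>degree Q. JL \<alpha> \<beta> (\<lambda>x. coeff Q i * (poly (qp \<alpha> \<beta> n) x * ((1-x)/2)^i)))"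
    by (rule JL_sum) (intro JI_cmult JI_qt[OF a b])
  also have "\<dots> = 0"
  proof (rule sum.neutral, rule ballI)
    fix i assume "i \<in> {..degree Q}"
    then have "i < n" using d dQ by auto
    then show "JL \<alpha> \<beta> (\<lambda>x. coeff Q i * (poly (qp \<alpha> \<beta> n) x * ((1-x)/2)^i)) = 0"
      by (simp only: JL_cmult JL_qp_t[OF a b] ortho_sum[OF a b] mult_zero_right)
  qed
  finally show ?thesis .
qed

definition Nn :: "real \<Rightarrow> real \<Rightarrow> nat \<Rightarrow> real" where
  "Nn \<alpha> \<beta> n = ecoef \<alpha> \<beta> n n * 2 powr (\<alpha>+\<beta>+1) * (Gamma (\<alpha>+1) * Gamma (\<beta>+1) / Gamma (real n+\<alpha>+\<beta>+1) *
     ((-1)^n * pochhammer (\<beta>+1) n * fact n / pochhammer (real n+\<alpha>+\<beta>+1) (n+1)))"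

lemma JL_qp_norm:
  assumes a: "\<alpha> > -1" and b: "\<beta> > -1" and n: "n \<ge> 1"
  shows "JL \<alpha> \<beta> (\<lambda>x. poly (qp \<alpha> \<beta> n) x * poly (qp \<alpha> \<beta> n) x) = Nn \<alpha> \<beta> n"
proof -
  have "JL \<alpha> \<beta> (\<lambda>x. poly (qp \<alpha> \<beta> n) x * poly (qp \<alpha> \<beta> n) x) =
        JL \<alpha> \<beta> (\<lambda>x. \<Sum>m\<le>n. ecoef \<alpha> \<beta> n m * (poly (qp \<alpha> \<beta> n) x * ((1-x)/2)^m))"
    by (rule JL_cong) (simp only: poly_qp[of _ _ n] sum_distrib_left mult_ac)
  also have "\<dots> = (\<Sum>m\<le>n. JL \<alpha> \<beta> (\<lambda>x. ecoef \<alpha> \<beta> n m * (poly (qp \<alpha> \<beta> n) x * ((1-x)/2)^m)))"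
    by (rule JL_sum) (intro JI_cmult JI_qt[OF a b])
  also have "\<dots> = (\<Sum>m\<le>n. ecoef \<alpha> \<beta> n m * (2 powr (\<alpha>+\<beta>+1) * (\<Sum>k\<le>n. ecoef \<alpha> \<beta> n k * Beta (\<alpha>+1+real(k+m)) (\<beta>+1))))"
    by (simp only: JL_cmult JL_qp_t[OF a b])
  also have "\<dots> = ecoef \<alpha> \<beta> n n * (2 powr (\<alpha>+\<beta>+1) * (\<Sum>k\<le>n. ecoef \<alpha> \<beta> n k * Beta (\<alpha>+1+real(k+n)) (\<beta>+1)))"
  proof -
    have "(\<Sum>m<n. ecoef \<alpha> \<beta> n m * (2 powr (\<alpha>+\<beta>+1) * (\<Sum>k\<le>n. ecoef \<alpha> \<beta> n k * Beta (\<alpha>+1+real(k+m)) (\<beta>+1)))) = 0"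
    proof (rule sum.neutral, rule ballI)
      fix m assume "m \<in> {..<n}"
      then have "m < n" by simp
      then show "ecoef \<alpha> \<beta> n m * (2 powr (\<alpha>+\<beta>+1) * (\<Sum>k\<le>n. ecoef \<alpha> \<beta> n k * Beta (\<alpha>+1+real(k+m)) (\<beta>+1))) = 0"
        by (simp only: ortho_sum[OF a b] mult_zero_right)
    qed
    then show ?thesis by (simp add: lessThan_Suc_atMost[symmetric])
  qed
  also have "\<dots> = Nn \<alpha> \<beta> n" unfolding Nn_def norm_sum[OF a b n] by (simp add: mult_ac)
  finally show ?thesis .
qed

lemma orth_deg: "orthonormal_jacobi \<alpha> \<beta> p \<Longrightarrow> degree (p n) = n"
  unfolding orthonormal_jacobi_def by blast

lemma orth_lead: "orthonormal_jacobi \<alpha> \<beta> p \<Longrightarrow> lead_coeff (p n) \<noteq> 0"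
  unfolding orthonormal_jacobi_def by (metis less_irrefl)

lemma orth_JI: "orthonormal_jacobi \<alpha> \<beta> p \<Longrightarrow> JI \<alpha> \<beta> (\<lambda>x. poly (p m) x * poly (p n) x)"
  unfolding orthonormal_jacobi_def JI_def by blast

lemma orth_JL: "orthonormal_jacobi \<alpha> \<beta> p \<Longrightarrow> JL \<alpha> \<beta> (\<lambda>x. poly (p m) x * poly (p n) x) = (if m = n then 1 else 0)"
  unfolding orthonormal_jacobi_def JL_def by blast

lemma span_orth:
  assumes o: "orthonormal_jacobi \<alpha> \<beta> p"
  shows "degree Q \<le> N \<Longrightarrow> \<exists>c. Q = (\<Sum>i\<le>N. smult (c i) (p i))"
proof (induction N arbitrary: Q)
  case 0
  then obtain q where q: "Q = [:q:]" by (metis degree_eq_zeroE le_zero_eq)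
  obtain r where r: "p 0 = [:r:]" using orth_deg[OF o, of 0] by (metis degree_eq_zeroE)
  have "r \<noteq> 0" using orth_lead[OF o, of 0] r by simp
  then have "Q = smult (q / r) (p 0)" by (simp add: q r)
  then show ?case by (intro exI[of _ "\<lambda>_. q / r"]) simp
next
  case (Suc N)
  define d where "d = coeff Q (Suc N) / lead_coeff (p (Suc N))"
  define Q' where "Q' = Q - smult d (p (Suc N))"
  have l: "lead_coeff (p (Suc N)) \<noteq> 0" by (rule orth_lead[OF o])
  have dg: "degree (p (Suc N)) = Suc N" by (rule orth_deg[OF o])
  have "degree Q' \<le> N"
  proof (rule degree_le, intro allI impI)
    fix i assume "N < i"
    show "coeff Q' i = 0"
    proof (cases "i = Suc N")
      case True then show ?thesis using l dg by (simp add: Q'_def d_def)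
    next
      case False
      then have "i > Suc N" using \<open>N < i\<close> by simp
      then have "coeff Q i = 0" "coeff (p (Suc N)) i = 0" using Suc.prems dg by (auto intro: coeff_eq_0)
      then show ?thesis by (simp add: Q'_def)
    qed
  qed
  from Suc.IH[OF this] obtain c where c: "Q' = (\<Sum>i\<le>N. smult (c i) (p i))" by blast
  have "Q = (\<Sum>i\<le>N. smult (c i) (p i)) + smult d (p (Suc N))" using c by (simp add: Q'_def)
  also have "\<dots> = (\<Sum>i\<le>Suc N. smult ((c(Suc N := d)) i) (p i))"
    by (simp add: sum.atMost_Suc)
  finally show ?case by blast
qed

lemma expand_orth:
  assumes o: "orthonormal_jacobi \<alpha> \<beta> p" and d: "degree Q \<le> N"
  shows "Q = (\<Sum>i\<le>N. smult (JL \<alpha> \<beta> (\<lambda>x. poly Q x * poly (p i) x)) (p i))"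
proof -
  obtain c where c: "Q = (\<Sum>i\<le>N. smult (c i) (p i))" using span_orth[OF o d] by blast
  have "JL \<alpha> \<beta> (\<lambda>x. poly Q x * poly (p k) x) = c k" if k: "k \<le> N" for k
  proof -
    have "JL \<alpha> \<beta> (\<lambda>x. poly Q x * poly (p k) x) = JL \<alpha> \<beta> (\<lambda>x. \<Sum>i\<le>N. c i * (poly (p i) x * poly (p k) x))"
      by (rule JL_cong) (subst c, simp add: poly_sum sum_distrib_left mult_ac)
    also have "\<dots> = (\<Sum>i\<le>N. c i * JL \<alpha> \<beta> (\<lambda>x. poly (p i) x * poly (p k) x))"
      by (subst JL_sum) (auto intro!: JI_cmult orth_JI[OF o] simp: JL_cmult)
    also have "\<dots> = (\<Sum>i\<le>N. (if i = k then c k else 0))"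
      by (rule sum.cong) (auto simp: orth_JL[OF o])
    also have "\<dots> = c k" using k by simp
    finally show ?thesis .
  qed
  then show ?thesis by (subst c) (auto intro!: sum.cong)
qed

lemma degree_qp: "degree (qp \<alpha> \<beta> n) \<le> n"
  unfolding qp_def
proof (rule degree_sum_le)
  fix k assume "k \<in> {..n}"
  have "degree (smult (ecoef \<alpha> \<beta> n k) (tpoly ^ k)) \<le> degree (tpoly ^ k)" by (rule degree_smult_le)
  also have "\<dots> \<le> degree tpoly * k" by (rule degree_power_le)
  also have "\<dots> \<le> k" by (simp add: tpoly_def)
  finally show "degree (smult (ecoef \<alpha> \<beta> n k) (tpoly ^ k)) \<le> n" using \<open>k \<in> {..n}\<close> by simp
qed simp

lemma Nn_nonzero:
  assumes a: "\<alpha> > -1" and b: "\<beta> > -1" and n: "n \<ge> 1"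
  shows "Nn \<alpha> \<beta> n \<noteq> 0"
proof -
  have c0: "real n + \<alpha> + \<beta> + 1 > 0" using a b n by linarith
  have "pochhammer (real n + \<alpha> + \<beta> + 1) n > 0" "pochhammer (\<alpha> + 1) n > 0"
       "pochhammer (\<beta> + 1) n > 0" "pochhammer (real n + \<alpha> + \<beta> + 1) (n+1) > 0"
    using a b c0 by (auto intro!: pochhammer_pos)
  moreover have "Gamma (\<alpha>+1) > 0" "Gamma (\<beta>+1) > 0" "Gamma (real n+\<alpha>+\<beta>+1) > 0"
    using a b c0 by (auto intro!: Gamma_real_pos)
  ultimately show ?thesis unfolding Nn_def ecoef_def by simp
qed

lemma main_identity:
  assumes a: "\<alpha> > -1" and b: "\<beta> > -1" and o: "orthonormal_jacobi \<alpha> \<beta> p" and n: "n \<ge> 1"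
  shows "(poly ((pderiv ^^ j) (p n)) 1)^2 = (ecoef \<alpha> \<beta> n j * (-1/2)^j * fact j)^2 / Nn \<alpha> \<beta> n"
proof -
  define q where "q = qp \<alpha> \<beta> n"
  define \<kappa> where "\<kappa> = JL \<alpha> \<beta> (\<lambda>x. poly q x * poly (p n) x)"
  have "q = (\<Sum>i\<le>n. smult (JL \<alpha> \<beta> (\<lambda>x. poly q x * poly (p i) x)) (p i))"
    by (rule expand_orth[OF o]) (simp add: q_def degree_qp)
  also have "\<dots> = (\<Sum>i\<le>n. if i = n then smult \<kappa> (p n) else 0)"
  proof (rule sum.cong[OF refl])
    fix i assume "i \<in> {..n}"
    show "smult (JL \<alpha> \<beta> (\<lambda>x. poly q x * poly (p i) x)) (p i) = (if i = n then smult \<kappa> (p n) else 0)"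
    proof (cases "i = n")
      case True then show ?thesis by (simp add: \<kappa>_def)
    next
      case False
      then have "i < n" using \<open>i \<in> {..n}\<close> by simp
      then have "JL \<alpha> \<beta> (\<lambda>x. poly q x * poly (p i) x) = 0"
        unfolding q_def by (intro JL_qp_lower[OF a b]) (simp add: orth_deg[OF o])
      then show ?thesis using False by simp
    qed
  qed
  also have "\<dots> = smult \<kappa> (p n)" by simp
  finally have qk: "q = smult \<kappa> (p n)" .
  have "Nn \<alpha> \<beta> n = JL \<alpha> \<beta> (\<lambda>x. poly q x * poly q x)" unfolding q_def by (rule JL_qp_norm[OF a b n, symmetric])
  also have "\<dots> = JL \<alpha> \<beta> (\<lambda>x. (\<kappa> * \<kappa>) * (poly (p n) x * poly (p n) x))"
    by (rule JL_cong) (simp add: qk)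
  also have "\<dots> = \<kappa>^2" by (simp add: JL_cmult orth_JL[OF o] power2_eq_square)
  finally have Nk: "Nn \<alpha> \<beta> n = \<kappa>^2" .
  have "poly ((pderiv ^^ j) q) 1 = ecoef \<alpha> \<beta> n j * (-1/2)^j * fact j"
    unfolding q_def qp_def by (rule higher_pderiv_tsum_at1) (simp add: ecoef_def)
  moreover have "poly ((pderiv ^^ j) q) 1 = \<kappa> * poly ((pderiv ^^ j) (p n)) 1"
    by (simp add: qk higher_pderiv_smult)
  ultimately have "(ecoef \<alpha> \<beta> n j * (-1/2)^j * fact j)^2 = \<kappa>^2 * (poly ((pderiv ^^ j) (p n)) 1)^2"
    by (metis power_mult_distrib)
  moreover have "\<kappa>^2 \<noteq> 0" using Nk Nn_nonzero[OF a b n] by simp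
  ultimately show ?thesis by (simp add: Nk)
qed

lemma gen_alg: "\<And>G1 G P f N w. G1 > 0 \<Longrightarrow> G > 0 \<Longrightarrow> P > 0 \<Longrightarrow> f > 0 \<Longrightarrow> N > 0 \<Longrightarrow> w > 0 \<Longrightarrow>
         G1 / (f * (P * N ^ 2) / ((w + 1) * (w * G) / G1)) * (N ^ 2 / (w * (w + 1))) = G / (f * (P::real))"
proof -
  fix G1 G P f N w :: real
  assume as: "G1 > 0" "G > 0" "P > 0" "f > 0" "N > 0" "w > 0"
  obtain X where X: "X = w * (w + 1)" by blast
  have X0: "X > 0" using as X by simp
  have e: "(w + 1) * (w * G) = G * X" using X by (simp add: algebra_simps)
  have "G1 / (f * (P * N ^ 2) / (G * X / G1)) * (N ^ 2 / X) = G / (f * P)"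
    using as X0 by (simp add: field_simps)
  then show "G1 / (f * (P * N ^ 2) / ((w + 1) * (w * G) / G1)) * (N ^ 2 / (w * (w + 1))) = G / (f * (P::real))"
    by (simp only: e X[symmetric])
qed

lemma Gamma_ratio_lim:
  fixes z :: real
  assumes z: "z > -1"
  shows "(\<lambda>n. Gamma (real n + z) / (fact n * real n powr (z - 1))) \<longlonglongrightarrow> 1"
proof -
  have z1: "z + 1 > 0" using z by simp
  have lim1: "(\<lambda>n. Gamma (z+1) / Gamma_series (z+1) n) \<longlonglongrightarrow> Gamma (z+1) / Gamma (z+1)"
  proof -
    have g0: "Gamma (z+1) \<noteq> 0" using Gamma_real_pos[OF z1] by simp
    show ?thesis by (intro tendsto_intros) (use g0 in auto)
  qed
  have lim2: "(\<lambda>n::nat. real n ^ 2 / ((real n + z) * (real n + z + 1))) \<longlonglongrightarrow> 1"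
    by real_asymp
  have "(\<lambda>n. Gamma (z+1) / Gamma_series (z+1) n * (real n ^ 2 / ((real n + z) * (real n + z + 1)))) \<longlonglongrightarrow> Gamma (z+1) / Gamma (z+1) * 1"
    by (intro tendsto_mult lim1 lim2)
  then have lim3: "(\<lambda>n. Gamma (z+1) / Gamma_series (z+1) n * (real n ^ 2 / ((real n + z) * (real n + z + 1)))) \<longlonglongrightarrow> 1"
    using Gamma_real_pos[OF z1] by simp
  show ?thesis
  proof (rule Lim_transform_eventually[OF lim3])
    show "\<forall>\<^sub>F n in sequentially. Gamma (z+1) / Gamma_series (z+1) n * (real n ^ 2 / ((real n + z) * (real n + z + 1))) =
            Gamma (real n + z) / (fact n * real n powr (z - 1))"
      using eventually_ge_at_top[of "1::nat"]
    proof eventually_elim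
      case (elim n)
      have n0: "real n > 0" using elim by simp
      have nz: "real n + z > 0" using elim z by simp
      have gs: "Gamma_series (z+1) n = fact n * real n powr (z+1) / pochhammer (z+1) (n+1)"
      proof -
        have "exp ((z+1) * ln (real n)) = real n powr (z+1)" using n0 by (simp add: powr_def)
        then show ?thesis unfolding Gamma_series_def of_real_eq_id id_def by (simp only:)
      qed
      have pg: "pochhammer (z+1) (n+1) = Gamma (real n + z + 2) / Gamma (z + 1)"
        using z1 by (subst poch_G) (simp_all add: add_ac)
      have g2: "Gamma (real n + z + 2) = (real n + z + 1) * ((real n + z) * Gamma (real n + z))"
      proof -
        have a1: "real n + z \<notin> \<int>\<^sub>\<le>\<^sub>0" "real n + z + 1 \<notin> \<int>\<^sub>\<le>\<^sub>0" using nz by (auto dest: nonpos_Ints_nonpos)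
        have "Gamma (real n + z + 2) = Gamma ((real n + z + 1) + 1)" by (rule arg_cong[where f=Gamma]) simp
        also have "\<dots> = (real n + z + 1) * Gamma (real n + z + 1)" using a1(2) by (rule Gamma_plus1)
        also have "Gamma (real n + z + 1) = (real n + z) * Gamma (real n + z)" using a1(1) by (rule Gamma_plus1)
        finally show ?thesis .
      qed
      have pw: "real n powr (z+1) = real n powr (z - 1) * real n ^ 2"
      proof -
        have "real n powr (z+1) = real n powr ((z - 1) + real 2)" by (simp add: add.commute)
        also have "\<dots> = real n powr (z - 1) * real n powr (real 2)" by (rule powr_add)
        also have "real n powr (real 2) = real n ^ 2" using n0 by (rule powr_realpow)
        finally show ?thesis .
      qed
      have pos: "Gamma (z+1) > 0" "Gamma (real n + z) > 0" "real n powr (z-1) > 0" "fact n > (0::real)"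
        using z1 nz n0 by (auto intro!: Gamma_real_pos)
      show ?case unfolding gs pg g2 pw using gen_alg[OF pos(1) pos(2) pos(3) pos(4) n0 nz] by simp
    qed
  qed
qed

lemma poch_ratio_lim:
  fixes d :: real
  shows "(\<lambda>n. pochhammer (real n + d) j / real n ^ j) \<longlonglongrightarrow> 1"
proof -
  have "(\<lambda>n. \<Prod>i<j. (real n + d + real i) / real n) \<longlonglongrightarrow> (\<Prod>i<j. 1)"
  proof (rule tendsto_prod)
    fix i assume "i \<in> {..<j}"
    show "(\<lambda>n. (real n + d + real i) / real n) \<longlonglongrightarrow> 1" by real_asymp
  qed
  moreover have "(\<lambda>n. pochhammer (real n + d) j / real n ^ j) = (\<lambda>n. \<Prod>i<j. (real n + d + real i) / real n)"
    by (simp add: pochhammer_prod prod_dividef atLeast0LessThan)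
  ultimately show ?thesis by simp
qed

lemma Nn_simp:
  assumes a: "\<alpha> > -1" and b: "\<beta> > -1" and n: "n \<ge> 1"
  shows "Nn \<alpha> \<beta> n = 2 powr (\<alpha>+\<beta>+1) * Gamma (\<alpha>+1)^2 * Gamma (real n + (\<beta>+1)) * fact n /
           (Gamma (real n + (\<alpha>+1)) * Gamma (real n + (\<alpha>+\<beta>+1)) * (2 * real n + \<alpha> + \<beta> + 1))"
proof -
  obtain Q where Q: "Q = 2 * real n + \<alpha> + \<beta> + 1" by blast
  define c where "c = real n + \<alpha> + \<beta> + 1"
  have c0: "c > 0" using a b n unfolding c_def by linarith
  have pc: "pochhammer c (n+1) = pochhammer c n * Q"
    by (simp add: pochhammer_rec' c_def Q algebra_simps del: pochhammer_Suc)
  have pA: "pochhammer (\<alpha>+1) n = Gamma (real n + (\<alpha>+1)) / Gamma (\<alpha>+1)"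
    using a by (subst poch_G) (simp_all add: add_ac)
  have pB: "pochhammer (\<beta>+1) n = Gamma (real n + (\<beta>+1)) / Gamma (\<beta>+1)"
    using b by (subst poch_G) (simp_all add: add_ac)
  have gc: "Gamma (real n + \<alpha> + \<beta> + 1) = Gamma (real n + (\<alpha>+\<beta>+1))" by (simp add: add_ac)
  have pos: "pochhammer c n > 0" "Gamma (\<alpha>+1) > 0" "Gamma (\<beta>+1) > 0"
     "Gamma (real n + (\<alpha>+1)) > 0" "Gamma (real n + (\<beta>+1)) > 0" "Gamma (real n + (\<alpha>+\<beta>+1)) > 0"
     "Q > 0"
    using a b c0 n by (auto intro!: Gamma_real_pos pochhammer_pos simp: c_def add_ac Q)
  have "Nn \<alpha> \<beta> n = ((-1)^n * pochhammer c n / pochhammer (\<alpha>+1) n) * 2 powr (\<alpha>+\<beta>+1) *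
      (Gamma (\<alpha>+1) * Gamma (\<beta>+1) / Gamma (real n + (\<alpha>+\<beta>+1)) *
       ((-1)^n * pochhammer (\<beta>+1) n * fact n / pochhammer c (n+1)))"
    unfolding Nn_def ecoef_def c_def gc by simp
  also have "\<dots> = ((-1)^n * (-1)^n) * (pochhammer c n / pochhammer c n) * 2 powr (\<alpha>+\<beta>+1) *
      (Gamma (\<alpha>+1) * Gamma (\<beta>+1) / Gamma (real n + (\<alpha>+\<beta>+1)) *
       (pochhammer (\<beta>+1) n * fact n / (pochhammer (\<alpha>+1) n * Q)))"
    unfolding pc by (simp add: field_simps)
  also have "\<dots> = 2 powr (\<alpha>+\<beta>+1) *
      (Gamma (\<alpha>+1) * Gamma (\<beta>+1) / Gamma (real n + (\<alpha>+\<beta>+1)) *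
       (pochhammer (\<beta>+1) n * fact n / (pochhammer (\<alpha>+1) n * Q)))"
    using pos by (simp add: power_mult_distrib[symmetric])
  also have "\<dots> = 2 powr (\<alpha>+\<beta>+1) * Gamma (\<alpha>+1)^2 * Gamma (real n + (\<beta>+1)) * fact n /
           (Gamma (real n + (\<alpha>+1)) * Gamma (real n + (\<alpha>+\<beta>+1)) * Q)"
    unfolding pA pB using pos by (simp add: field_simps power2_eq_square)
  finally show ?thesis unfolding Q .
qed

lemma powr_s_split:
  assumes "x > 0"
  shows "x powr (4 * real j + 2 * \<alpha> + 1) = (x ^ j)^4 * (x powr \<alpha>)^2 * x"
proof -
  have ex: "4 * real j + 2 * \<alpha> + 1 = real (4*j) + \<alpha> + \<alpha> + 1" by simp
  have "x powr (4 * real j + 2 * \<alpha> + 1) = x powr (real (4*j)) * x powr \<alpha> * x powr \<alpha> * x powr 1"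
    unfolding ex by (simp only: powr_add)
  also have "\<dots> = (x ^ j)^4 * (x powr \<alpha>)^2 * x"
  proof -
    have p1: "x powr real (4*j) = (x^j)^4" using powr_realpow[OF assms, of "4*j"] by (simp add: power_mult[symmetric] mult.commute)
    have p2: "x powr 1 = x" using assms by simp
    show ?thesis unfolding p1 p2 power2_eq_square by (simp add: mult.assoc)
  qed
  finally show ?thesis .
qed

lemma Fj_ratio:
  assumes a: "\<alpha> > -1" and b: "\<beta> > -1" and o: "orthonormal_jacobi \<alpha> \<beta> p" and n: "n \<ge> 1"
  shows "(poly ((pderiv ^^ j) (p n)) 1)^2 / real n powr (4 * real j + 2 * \<alpha> + 1) =
   (real (n choose j) * fact j / real n ^ j)^2 * (pochhammer (real n + (\<alpha>+\<beta>+1)) j / real n ^ j)^2 *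
   (1 / (4^j * pochhammer (\<alpha>+1) j ^ 2 * 2 powr (\<alpha>+\<beta>+1) * Gamma (\<alpha>+1)^2)) *
   (Gamma (real n + (\<alpha>+1)) * Gamma (real n + (\<alpha>+\<beta>+1)) / (Gamma (real n + (\<beta>+1)) * fact n * (real n powr \<alpha>)^2)) *
   ((2 * real n + \<alpha> + \<beta> + 1) / real n)"
proof -
  have n0: "real n > 0" using n by simp
  obtain Cb Pc PA Ga W GA GC GB fn u N Q fj where
    defs: "Cb = real (n choose j)" "Pc = pochhammer (real n + (\<alpha>+\<beta>+1)) j" "PA = pochhammer (\<alpha>+1) j"
      "Ga = Gamma (\<alpha>+1)" "W = 2 powr (\<alpha>+\<beta>+1)" "GA = Gamma (real n + (\<alpha>+1))"
      "GC = Gamma (real n + (\<alpha>+\<beta>+1))" "GB = Gamma (real n + (\<beta>+1))" "fn = (fact n :: real)"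
      "u = real n powr \<alpha>" "N = real n" "Q = 2 * real n + \<alpha> + \<beta> + 1" "fj = (fact j :: real)"
    by blast
  have pos: "PA > 0" "Ga > 0" "W > 0" "GA > 0" "GC > 0" "GB > 0" "fn > 0" "u > 0" "N > 0" "Q > 0"
    using a b n0 unfolding defs by (auto intro!: Gamma_real_pos pochhammer_pos)
  have e1: "(ecoef \<alpha> \<beta> n j * (-1/2)^j * fact j)^2 = Cb^2 * Pc^2 * fj^2 / (PA^2 * 4^j)"
  proof -
    have "ecoef \<alpha> \<beta> n j * (-1/2)^j * fact j = ((-1)^j * (-1/2)^j) * (Cb * Pc * fj / PA)"
      unfolding ecoef_def defs by (simp add: add_ac)
    also have "(-1)^j * (-1/2)^j = (1/2::real)^j" by (simp add: power_mult_distrib[symmetric])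
    finally have "(ecoef \<alpha> \<beta> n j * (-1/2)^j * fact j)^2 = ((1/2)^j)^2 * (Cb * Pc * fj / PA)^2"
      by (simp only: times_divide_eq_right[symmetric] power_mult_distrib)
    also have "((1/2::real)^j)^2 = 1 / 4^j" by (simp add: power_mult_distrib[symmetric] power_one_over power2_eq_square)
    finally show ?thesis by (simp add: power_mult_distrib power_divide)
  qed
  have e2: "Nn \<alpha> \<beta> n = W * Ga^2 * GB * fn / (GA * GC * Q)"
    unfolding Nn_simp[OF a b n] defs ..
  have e3: "real n powr (4 * real j + 2 * \<alpha> + 1) = (N ^ j)^4 * u^2 * N"
    unfolding defs by (rule powr_s_split[OF n0])
  have "(poly ((pderiv ^^ j) (p n)) 1)^2 / real n powr (4 * real j + 2 * \<alpha> + 1) =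
        Cb^2 * Pc^2 * fj^2 / (PA^2 * 4^j) / (W * Ga^2 * GB * fn / (GA * GC * Q)) / ((N ^ j)^4 * u^2 * N)"
    unfolding main_identity[OF a b o n] e1 e2 e3 ..
  also have "\<dots> = (Cb * fj / N ^ j)^2 * (Pc / N ^ j)^2 * (1 / (4^j * PA ^ 2 * W * Ga^2)) *
      (GA * GC / (GB * fn * u^2)) * (Q / N)"
    using pos by (simp add: field_simps power2_eq_square power4_eq_xxxx)
  finally show ?thesis unfolding defs .
qed

lemma binom_fact_lim: "(\<lambda>n. real (n choose j) * fact j / real n ^ j) \<longlonglongrightarrow> 1"
proof -
  have "real (n choose j) * fact j = pochhammer (real n + (1 - real j)) j" for n
    by (simp add: binomial_gbinomial gbinomial_pochhammer' algebra_simps)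
  then show ?thesis using poch_ratio_lim[of "1 - real j" j] by simp
qed

lemma X3_lim:
  assumes a: "\<alpha> > -1" and b: "\<beta> > -1"
  shows "(\<lambda>n. Gamma (real n + (\<alpha>+1)) * Gamma (real n + (\<alpha>+\<beta>+1)) / (Gamma (real n + (\<beta>+1)) * fact n * (real n powr \<alpha>)^2)) \<longlonglongrightarrow> 1"
proof -
  let ?G = "\<lambda>z n. Gamma (real n + z) / (fact n * real n powr (z - 1))"
  have "(\<lambda>n. ?G (\<alpha>+1) n * ?G (\<alpha>+\<beta>+1) n / ?G (\<beta>+1) n) \<longlonglongrightarrow> 1 * 1 / 1"
    by (intro tendsto_intros Gamma_ratio_lim) (use a b in auto)
  then have L: "(\<lambda>n. ?G (\<alpha>+1) n * ?G (\<alpha>+\<beta>+1) n / ?G (\<beta>+1) n) \<longlonglongrightarrow> 1" by simp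
  show ?thesis
  proof (rule Lim_transform_eventually[OF L])
    show "\<forall>\<^sub>F n in sequentially. ?G (\<alpha>+1) n * ?G (\<alpha>+\<beta>+1) n / ?G (\<beta>+1) n =
       Gamma (real n + (\<alpha>+1)) * Gamma (real n + (\<alpha>+\<beta>+1)) / (Gamma (real n + (\<beta>+1)) * fact n * (real n powr \<alpha>)^2)"
      using eventually_ge_at_top[of "1::nat"]
    proof eventually_elim
      case (elim n)
      have n0: "real n > 0" using elim by simp
      obtain u v GA GC GB f where d: "u = real n powr \<alpha>" "v = real n powr \<beta>" "GA = Gamma (real n + (\<alpha>+1))"
        "GC = Gamma (real n + (\<alpha>+\<beta>+1))" "GB = Gamma (real n + (\<beta>+1))" "f = (fact n :: real)" by blast
      have pos: "u > 0" "v > 0" "GB > 0" "f > 0" using n0 a b unfolding d by (auto intro!: Gamma_real_pos)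
      have p1: "real n powr (\<alpha> + 1 - 1) = u" "real n powr (\<beta> + 1 - 1) = v" "real n powr (\<alpha> + \<beta> + 1 - 1) = u * v"
        unfolding d by (simp_all add: powr_add)
      show ?case unfolding p1 d[symmetric] using pos by (simp add: field_simps power2_eq_square)
    qed
  qed
qed

lemma Fj_lim:
  assumes a: "\<alpha> > -1" and b: "\<beta> > -1" and o: "orthonormal_jacobi \<alpha> \<beta> p"
  shows "(\<lambda>n. (poly ((pderiv ^^ j) (p n)) 1)^2 / real n powr (4 * real j + 2 * \<alpha> + 1))
     \<longlonglongrightarrow> 1 / (2 powr (2 * real j + \<alpha> + \<beta>) * Gamma (\<alpha> + real j + 1)^2)"
proof -
  define K where "K = 1 / (4^j * pochhammer (\<alpha>+1) j ^ 2 * 2 powr (\<alpha>+\<beta>+1) * Gamma (\<alpha>+1)^2)"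
  have X4: "(\<lambda>n. (2 * real n + \<alpha> + \<beta> + 1) / real n) \<longlonglongrightarrow> 2" by real_asymp
  have L: "(\<lambda>n. (real (n choose j) * fact j / real n ^ j)^2 * (pochhammer (real n + (\<alpha>+\<beta>+1)) j / real n ^ j)^2 * K *
   (Gamma (real n + (\<alpha>+1)) * Gamma (real n + (\<alpha>+\<beta>+1)) / (Gamma (real n + (\<beta>+1)) * fact n * (real n powr \<alpha>)^2)) *
   ((2 * real n + \<alpha> + \<beta> + 1) / real n)) \<longlonglongrightarrow> 1^2 * 1^2 * K * 1 * 2"
    by (intro tendsto_intros binom_fact_lim poch_ratio_lim X3_lim[OF a b] X4)
  have KK: "1^2 * 1^2 * K * 1 * 2 = 1 / (2 powr (2 * real j + \<alpha> + \<beta>) * Gamma (\<alpha> + real j + 1)^2)"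
  proof -
    have g: "pochhammer (\<alpha>+1) j * Gamma (\<alpha>+1) = Gamma (\<alpha> + real j + 1)"
    proof -
      have g0: "Gamma (\<alpha>+1) > 0" by (rule Gamma_real_pos) (use a in simp)
      have "pochhammer (\<alpha>+1) j = Gamma (\<alpha>+1+real j) / Gamma (\<alpha>+1)" by (rule poch_G) (use a in simp)
      then have "pochhammer (\<alpha>+1) j * Gamma (\<alpha>+1) = Gamma (\<alpha>+1+real j)" using g0 by simp
      then show ?thesis by (simp add: add_ac)
    qed
    have w: "(4::real)^j * 2 powr (\<alpha>+\<beta>+1) = 2 * 2 powr (2 * real j + \<alpha> + \<beta>)"
    proof -
      have "(4::real)^j = 2^(2*j)" by (simp add: power_mult)
      also have "\<dots> = 2 powr (real (2*j))" by (rule powr_realpow[symmetric]) simp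
      finally have "(4::real)^j = 2 powr (2 * real j)" by simp
      then have "(4::real)^j * 2 powr (\<alpha>+\<beta>+1) = 2 powr (2 * real j) * 2 powr (\<alpha>+\<beta>+1)" by simp
      also have "\<dots> = 2 powr (2 * real j + \<alpha> + \<beta> + 1)" by (simp add: powr_add[symmetric] add_ac)
      also have "\<dots> = 2 powr (2 * real j + \<alpha> + \<beta>) * 2 powr 1" by (rule powr_add)
      finally show ?thesis by simp
    qed
    have "K = 1 / (((4::real)^j * 2 powr (\<alpha>+\<beta>+1)) * (pochhammer (\<alpha>+1) j * Gamma (\<alpha>+1))^2)"
      unfolding K_def by (simp add: power_mult_distrib mult_ac)
    then show ?thesis unfolding g w by simp
  qed
  show ?thesis
  proof (rule Lim_transform_eventually[OF L[unfolded KK]])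
    show "\<forall>\<^sub>F n in sequentially. (real (n choose j) * fact j / real n ^ j)^2 * (pochhammer (real n + (\<alpha>+\<beta>+1)) j / real n ^ j)^2 * K *
   (Gamma (real n + (\<alpha>+1)) * Gamma (real n + (\<alpha>+\<beta>+1)) / (Gamma (real n + (\<beta>+1)) * fact n * (real n powr \<alpha>)^2)) *
   ((2 * real n + \<alpha> + \<beta> + 1) / real n) = (poly ((pderiv ^^ j) (p n)) 1)^2 / real n powr (4 * real j + 2 * \<alpha> + 1)"
      using eventually_ge_at_top[of "1::nat"]
      by eventually_elim (simp only: Fj_ratio[OF a b o] K_def)
  qed
qed

lemma stolz_cesaro:
  fixes a b :: "nat \<Rightarrow> real"
  assumes inc: "\<And>n. n \<ge> N \<Longrightarrow> b n < b (Suc n)"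
    and lim_b: "filterlim b at_top sequentially"
    and r: "(\<lambda>n. (a (Suc n) - a n) / (b (Suc n) - b n)) \<longlonglongrightarrow> L"
  shows "(\<lambda>n. a n / b n) \<longlonglongrightarrow> L"
proof (rule LIMSEQ_I)
  fix \<epsilon> :: real assume \<epsilon>: "\<epsilon> > 0"
  define \<delta> where "\<delta> = \<epsilon> / 2"
  have \<delta>: "\<delta> > 0" using \<epsilon> by (simp add: \<delta>_def)
  from LIMSEQ_D[OF r \<delta>] obtain M0 where
    M0: "\<And>n. n \<ge> M0 \<Longrightarrow> norm ((a (Suc n) - a n) / (b (Suc n) - b n) - L) < \<delta>" by blast
  define M where "M = max M0 N"
  define c where "c n = a n - L * b n" for n
  have step: "\<bar>c (Suc n) - c n\<bar> \<le> \<delta> * (b (Suc n) - b n)" if n: "n \<ge> M" for n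
  proof -
    define d where "d = b (Suc n) - b n"
    have d0: "d > 0" using inc[of n] n by (simp add: d_def M_def)
    have "\<bar>(a (Suc n) - a n) / d - L\<bar> < \<delta>" using M0[of n] n by (simp add: d_def M_def)
    moreover have "c (Suc n) - c n = ((a (Suc n) - a n) / d - L) * d"
      using d0 by (simp add: c_def d_def field_simps)
    ultimately have "\<bar>c (Suc n) - c n\<bar> \<le> \<delta> * d"
      using d0 by (simp add: abs_mult)
    then show ?thesis by (simp add: d_def)
  qed
  have tel: "\<bar>c n - c M\<bar> \<le> \<delta> * (b n - b M)" if "n \<ge> M" for n
    using that
  proof (induction n rule: dec_induct)
    case base then show ?case by simp
  next
    case (step n)
    have "\<bar>c (Suc n) - c M\<bar> \<le> \<bar>c (Suc n) - c n\<bar> + \<bar>c n - c M\<bar>" by linarith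
    also have "\<dots> \<le> \<delta> * (b (Suc n) - b n) + \<delta> * (b n - b M)"
      using \<open>M \<le> n\<close> step.IH \<open>M \<le> n \<Longrightarrow> \<bar>c (Suc n) - c n\<bar> \<le> \<delta> * (b (Suc n) - b n)\<close>
      by (intro add_mono) (auto intro: \<open>\<And>n. M \<le> n \<Longrightarrow> \<bar>c (Suc n) - c n\<bar> \<le> \<delta> * (b (Suc n) - b n)\<close>)
    also have "\<dots> = \<delta> * (b (Suc n) - b M)" by (simp add: algebra_simps)
    finally show ?case .
  qed
  define B where "B = (\<bar>c M\<bar> + \<delta> * \<bar>b M\<bar>) / \<delta> + 1"
  have "(\<bar>c M\<bar> + \<delta> * \<bar>b M\<bar>) / \<delta> \<ge> 0" using \<delta> by (intro divide_nonneg_pos) auto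
  then have B0: "B > 0" by (simp add: B_def)
  from lim_b have "eventually (\<lambda>n. B \<le> b n) sequentially" by (simp add: filterlim_at_top)
  then obtain M2 where M2: "\<And>n. n \<ge> M2 \<Longrightarrow> B \<le> b n" by (auto simp: eventually_sequentially)
  show "\<exists>no. \<forall>n\<ge>no. norm (a n / b n - L) < \<epsilon>"
  proof (intro exI allI impI)
    fix n assume n: "n \<ge> max M M2"
    have bn: "b n \<ge> B" using M2 n by simp
    have bpos: "b n > 0" using bn B0 by simp
    have "norm (a n / b n - L) = \<bar>c n\<bar> / b n" using bpos by (simp add: c_def field_simps abs_div)
    also have "\<dots> \<le> (\<bar>c M\<bar> + \<delta> * (b n - b M)) / b n"
      using tel[of n] n bpos by (intro divide_right_mono) auto
    also have "\<dots> \<le> (\<bar>c M\<bar> + \<delta> * \<bar>b M\<bar>) / b n + \<delta>"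
    proof -
      have "\<delta> * (- b M) \<le> \<delta> * \<bar>b M\<bar>" by (rule mult_left_mono) (use \<delta> in auto)
      then have "\<bar>c M\<bar> + \<delta> * (b n - b M) \<le> (\<bar>c M\<bar> + \<delta> * \<bar>b M\<bar>) + \<delta> * b n"
        by (simp add: algebra_simps)
      then have "(\<bar>c M\<bar> + \<delta> * (b n - b M)) / b n \<le> ((\<bar>c M\<bar> + \<delta> * \<bar>b M\<bar>) + \<delta> * b n) / b n"
        using bpos by (intro divide_right_mono) auto
      also have "\<dots> = (\<bar>c M\<bar> + \<delta> * \<bar>b M\<bar>) / b n + \<delta>"
        using bpos by (simp add: add_divide_distrib)
      finally show ?thesis .
    qed
    also have "(\<bar>c M\<bar> + \<delta> * \<bar>b M\<bar>) / b n < \<delta>"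
    proof -
      have "\<bar>c M\<bar> + \<delta> * \<bar>b M\<bar> < \<delta> * B" using \<delta> by (simp add: B_def field_simps)
      also have "\<dots> \<le> \<delta> * b n" using bn \<delta> by simp
      finally show ?thesis using bpos by (simp add: field_simps)
    qed
    finally show "norm (a n / b n - L) < \<epsilon>" by (simp add: \<delta>_def)
  qed
qed

lemma K_lim:
  fixes j :: nat and \<alpha> \<beta> :: real and p :: "nat \<Rightarrow> real poly"
  assumes a: "\<alpha> > -1" and b: "\<beta> > -1" and o: "orthonormal_jacobi \<alpha> \<beta> p"
  defines "s1 \<equiv> 4 * real j + 2 * \<alpha> + 1"
  shows "(\<lambda>m. kernel_jj p j m / real m powr (s1 + 1)) \<longlonglongrightarrow>
           1 / (2 powr (2 * real j + \<alpha> + \<beta>) * Gamma (\<alpha> + real j + 1)^2) * inverse (s1 + 1)"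
proof -
  have e0: "s1 + 1 > 0" using a unfolding s1_def by simp
  let ?F = "\<lambda>n. (poly ((pderiv ^^ j) (p n)) 1)^2"
  show ?thesis
  proof (rule stolz_cesaro[where N=0])
    fix n :: nat
    show "real n powr (s1 + 1) < real (Suc n) powr (s1 + 1)"
      using e0 by (intro powr_less_mono2) auto
  next
    show "filterlim (\<lambda>m. real m powr (s1 + 1)) at_top sequentially" using e0 by real_asymp
  next
    have L1: "(\<lambda>n. ?F (Suc n) / real (Suc n) powr s1) \<longlonglongrightarrow> 1 / (2 powr (2 * real j + \<alpha> + \<beta>) * Gamma (\<alpha> + real j + 1)^2)"
      using LIMSEQ_Suc[OF Fj_lim[OF a b o, of j]] unfolding s1_def .
    have L2: "(\<lambda>m. real (Suc m) powr s1 / (real (Suc m) powr (s1 + 1) - real m powr (s1 + 1))) \<longlonglongrightarrow> inverse (s1 + 1)"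
      using e0 by real_asymp
    have "(\<lambda>n. ?F (Suc n) / real (Suc n) powr s1 * (real (Suc n) powr s1 / (real (Suc n) powr (s1 + 1) - real n powr (s1 + 1))))
       \<longlonglongrightarrow> 1 / (2 powr (2 * real j + \<alpha> + \<beta>) * Gamma (\<alpha> + real j + 1)^2) * inverse (s1 + 1)"
      by (rule tendsto_mult[OF L1 L2])
    moreover have "(\<lambda>n. ?F (Suc n) / real (Suc n) powr s1 * (real (Suc n) powr s1 / (real (Suc n) powr (s1 + 1) - real n powr (s1 + 1))))
      = (\<lambda>n. (kernel_jj p j (Suc n) - kernel_jj p j n) / (real (Suc n) powr (s1 + 1) - real n powr (s1 + 1)))"
      by (rule ext) (simp add: kernel_jj_def)
    ultimately show "(\<lambda>n. (kernel_jj p j (Suc n) - kernel_jj p j n) / (real (Suc n) powr (s1 + 1) - real n powr (s1 + 1)))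
       \<longlonglongrightarrow> 1 / (2 powr (2 * real j + \<alpha> + \<beta>) * Gamma (\<alpha> + real j + 1)^2) * inverse (s1 + 1)" by simp
  qed
qed

lemma A_lim:
  fixes j :: nat and \<alpha> \<beta> :: real and p :: "nat \<Rightarrow> real poly"
  assumes a: "\<alpha> > -1" and b: "\<beta> > -1" and o: "orthonormal_jacobi \<alpha> \<beta> p"
  defines "s1 \<equiv> 4 * real j + 2 * \<alpha> + 1"
  defines "L1 \<equiv> 1 / (2 powr (2 * real j + \<alpha> + \<beta>) * Gamma (\<alpha> + real j + 1)^2)"
  shows "(\<lambda>n. (\<Sum>i=j+1..n. (jac_lambda \<alpha> \<beta> i - jac_lambda \<alpha> \<beta> (i - 1)) * kernel_jj p j (i - 1)) / real n powr (s1 + 3))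
           \<longlonglongrightarrow> L1 * inverse (s1 + 1) * (2 / (s1 + 3))"
proof -
  have e0: "s1 + 1 > 0" using a unfolding s1_def by simp
  define A where "A n = (\<Sum>i=j+1..n. (jac_lambda \<alpha> \<beta> i - jac_lambda \<alpha> \<beta> (i - 1)) * kernel_jj p j (i - 1))" for n
  have dA: "A (Suc n) - A n = (2 * real n + \<alpha> + \<beta> + 2) * kernel_jj p j n" if "n \<ge> j" for n
  proof -
    have "A (Suc n) = A n + (jac_lambda \<alpha> \<beta> (Suc n) - jac_lambda \<alpha> \<beta> n) * kernel_jj p j n"
      using that unfolding A_def by (simp add: sum.cl_ivl_Suc)
    moreover have "jac_lambda \<alpha> \<beta> (Suc n) - jac_lambda \<alpha> \<beta> n = 2 * real n + \<alpha> + \<beta> + 2"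
      by (simp add: jac_lambda_def power2_eq_square algebra_simps)
    ultimately show ?thesis by simp
  qed
  show ?thesis unfolding A_def[symmetric]
  proof (rule stolz_cesaro[where N=0])
    fix n :: nat
    show "real n powr (s1 + 3) < real (Suc n) powr (s1 + 3)"
      using e0 by (intro powr_less_mono2) auto
  next
    show "filterlim (\<lambda>m. real m powr (s1 + 3)) at_top sequentially" using e0 by real_asymp
  next
    have L1: "(\<lambda>n. kernel_jj p j n / real n powr (s1 + 1)) \<longlonglongrightarrow> L1 * inverse (s1 + 1)"
      using K_lim[OF a b o, of j] unfolding s1_def L1_def .
    have L2: "(\<lambda>n. (2 * real n + \<alpha> + \<beta> + 2) * real n powr (s1 + 1) / (real (Suc n) powr (s1 + 3) - real n powr (s1 + 3))) \<longlonglongrightarrow> 2 / (s1 + 3)"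
    proof -
      have "(\<lambda>n. (2 * real n + \<alpha> + \<beta> + 2) * real n powr (s1 + 1) / (real (Suc n) powr (s1 + 3) - real n powr (s1 + 3))) \<longlonglongrightarrow> 2 * inverse (s1 + 3)"
        using e0 by real_asymp
      then show ?thesis by (simp add: divide_inverse)
    qed
    have L: "(\<lambda>n. kernel_jj p j n / real n powr (s1 + 1) * ((2 * real n + \<alpha> + \<beta> + 2) * real n powr (s1 + 1) / (real (Suc n) powr (s1 + 3) - real n powr (s1 + 3))))
       \<longlonglongrightarrow> L1 * inverse (s1 + 1) * (2 / (s1 + 3))"
      by (rule tendsto_mult[OF L1 L2])
    show "(\<lambda>n. (A (Suc n) - A n) / (real (Suc n) powr (s1 + 3) - real n powr (s1 + 3))) \<longlonglongrightarrow> L1 * inverse (s1 + 1) * (2 / (s1 + 3))"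
    proof (rule Lim_transform_eventually[OF L])
      show "\<forall>\<^sub>F n in sequentially. kernel_jj p j n / real n powr (s1 + 1) * ((2 * real n + \<alpha> + \<beta> + 2) * real n powr (s1 + 1) / (real (Suc n) powr (s1 + 3) - real n powr (s1 + 3)))
         = (A (Suc n) - A n) / (real (Suc n) powr (s1 + 3) - real n powr (s1 + 3))"
        using eventually_ge_at_top[of "max 1 j"]
      proof eventually_elim
        case (elim n)
        have P0: "real n powr (s1 + 1) \<noteq> 0" using elim by simp
        have gen: "\<And>x P Q D::real. P \<noteq> 0 \<Longrightarrow> x / P * (Q * P / D) = Q * x / D"
        proof -
          fix x P Q D :: real assume "P \<noteq> 0"
          then show "x / P * (Q * P / D) = Q * x / D" by (cases "D = 0") (simp_all add: field_simps)
        qed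
        have jn: "n \<ge> j" using elim by simp
        show ?case unfolding dA[OF jn] by (rule gen[OF P0])
      qed
    qed
  qed
qed

theorem mainTheorem5:
  fixes \<alpha> \<beta> M :: real and j :: nat and p :: "nat \<Rightarrow> real poly"
  assumes "\<alpha> > -1" and "\<beta> > -1" and "M > 0"
    and "orthonormal_jacobi \<alpha> \<beta> p"
  shows "(\<lambda>n. lambda_tilde \<alpha> \<beta> M p j n / real n powr (4 * real j + 2 * \<alpha> + 4))
           \<longlonglongrightarrow> M / (2 powr (2 * real j + \<alpha> + \<beta> + 1) * (2 * real j + \<alpha> + 2)
                  * (2 * real j + \<alpha> + 1) * (Gamma (\<alpha> + real j + 1)) ^ 2)"
proof -
  note a = assms(1) and b = assms(2) and o = assms(4)
  define s1 where "s1 = 4 * real j + 2 * \<alpha> + 1"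
  define L1 where "L1 = 1 / (2 powr (2 * real j + \<alpha> + \<beta>) * Gamma (\<alpha> + real j + 1)^2)"
  have e0: "s1 + 1 > 0" using a unfolding s1_def by simp
  have ex: "4 * real j + 2 * \<alpha> + 4 = s1 + 3" by (simp add: s1_def)
  have LA: "(\<lambda>n. (\<Sum>i=j+1..n. (jac_lambda \<alpha> \<beta> i - jac_lambda \<alpha> \<beta> (i - 1)) * kernel_jj p j (i - 1)) / real n powr (s1 + 3))
           \<longlonglongrightarrow> L1 * inverse (s1 + 1) * (2 / (s1 + 3))"
    using A_lim[OF a b o, of j] unfolding s1_def L1_def .
  have Llam: "(\<lambda>n. jac_lambda \<alpha> \<beta> n / real n powr (s1 + 3)) \<longlonglongrightarrow> 0"
    unfolding jac_lambda_def using e0 by real_asymp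
  have "(\<lambda>n. jac_lambda \<alpha> \<beta> n / real n powr (s1 + 3) + M * ((\<Sum>i=j+1..n. (jac_lambda \<alpha> \<beta> i - jac_lambda \<alpha> \<beta> (i - 1)) * kernel_jj p j (i - 1)) / real n powr (s1 + 3)))
      \<longlonglongrightarrow> 0 + M * (L1 * inverse (s1 + 1) * (2 / (s1 + 3)))"
    by (intro tendsto_intros Llam LA)
  moreover have "(\<lambda>n. jac_lambda \<alpha> \<beta> n / real n powr (s1 + 3) + M * ((\<Sum>i=j+1..n. (jac_lambda \<alpha> \<beta> i - jac_lambda \<alpha> \<beta> (i - 1)) * kernel_jj p j (i - 1)) / real n powr (s1 + 3)))
     = (\<lambda>n. lambda_tilde \<alpha> \<beta> M p j n / real n powr (4 * real j + 2 * \<alpha> + 4))"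
    unfolding ex lambda_tilde_def by (rule ext) (simp add: add_divide_distrib)
  moreover have "0 + M * (L1 * inverse (s1 + 1) * (2 / (s1 + 3))) = M / (2 powr (2 * real j + \<alpha> + \<beta> + 1) * (2 * real j + \<alpha> + 2)
                  * (2 * real j + \<alpha> + 1) * (Gamma (\<alpha> + real j + 1)) ^ 2)"
  proof -
    obtain P G where PG: "P = 2 powr (2 * real j + \<alpha> + \<beta>)" "G = Gamma (\<alpha> + real j + 1)" by blast
    have p2: "2 powr (2 * real j + \<alpha> + \<beta> + 1) = P * 2" unfolding PG by (simp add: powr_add)
    have pos: "P > 0" "G > 0" unfolding PG using a by (auto intro!: Gamma_real_pos)
    have s: "s1 + 1 = 2 * (2 * real j + \<alpha> + 1)" "s1 + 3 = 2 * (2 * real j + \<alpha> + 2)" by (simp_all add: s1_def)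
    obtain X Y where XY: "X = 2 * real j + \<alpha> + 1" "Y = 2 * real j + \<alpha> + 2" by blast
    have XY0: "X > 0" "Y > 0" using a unfolding XY by simp_all
    show ?thesis unfolding p2 s L1_def PG[symmetric] XY[symmetric] using pos XY0
      by (simp add: field_simps)
  qed
  ultimately show ?thesis by simp
qed

end
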